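(* Let $R$ be a finite group and let $\varphi$ be a non-identity automorphism of $R$. Then one of the following holds: (1) the number of inverse-closed subsets $S\subseteq R$ with $S^\varphi=S$ is at most $2^{\mathbf{c}(R)-|R|/96}$; (2) $A:=C_R(\varphi)$ is abelian of exponent greater than $2$ and has index $2$ in $R$, there is $x\in R\setminus A$ with $x^2$ an involution of $A$ and $xax^{-1}=a^{-1}$ for all $a\in A$ (so $R$ is generalized dicyclic over $A$), and $\varphi=\bar\iota_A$; (3) $R$ is abelian of exponent greater than $2$ and $\varphi=\iota$.
   Context: $\mathbf{I}(R)=\{x\in R\mid x^2=1\}$, $\mathbf{c}(R)=(|R|+|\mathbf{I}(R)|)/2$. A subset $S$ is inverse-closed if $S^{-1}=S$. $C_R(\varphi)=\{x\in R\mid x^\varphi=x\}$. $\iota:R\to R$ is $x\mapsto x^{-1}$. Generalized dicyclic: for $A$ abelian of even order and exponent $>2$ and $y$ an involution of $A$, $\mathrm{Dic}(A,y,x)=\langle A,x\mid x^2=y,\ x^{-1}ax=a^{-1}\ \forall a\in A\rangle$; $\bar\iota_A$ is the automorphism with $a^{\bar\iota_A}=a$ and $(ax)^{\bar\iota_A}=ax^{-1}$ for all $a\in A$. *)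

theory Defs
  imports Complex_Main "HOL-Algebra.Group"
begin

definition involution_set :: "('a, 'b) monoid_scheme \<Rightarrow> 'a set" where
  "involution_set G = {x \<in> carrier G. x \<otimes>\<^bsub>G\<^esub> x = \<one>\<^bsub>G\<^esub>}"

definition c_num :: "('a, 'b) monoid_scheme \<Rightarrow> real" where
  "c_num G = (real (card (carrier G)) + real (card (involution_set G))) / 2"

definition inverse_closed :: "('a, 'b) monoid_scheme \<Rightarrow> 'a set \<Rightarrow> bool" where
  "inverse_closed G S \<longleftrightarrow> (\<lambda>x. inv\<^bsub>G\<^esub> x) ` S = S"

definition centralizer_aut :: "('a, 'b) monoid_scheme \<Rightarrow> ('a \<Rightarrow> 'a) \<Rightarrow> 'a set" where
  "centralizer_aut G \<phi> = {x \<in> carrier G. \<phi> x = x}"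

end

theory Submission
  imports Defs
begin


lemma select_set:
  assumes fin: "finite Q" and fQ: "\<And>q. q \<in> Q \<Longrightarrow> f q \<in> Q"
    and nf: "\<And>q. q \<in> Q \<Longrightarrow> f q \<noteq> q" and inj: "inj_on f Q"
  shows "\<exists>M\<subseteq>Q. M \<inter> f ` M = {} \<and> card Q \<le> 3 * card M
           \<and> ((\<forall>q\<in>Q. f (f q) = q) \<longrightarrow> card Q \<le> 2 * card M \<and> Q \<subseteq> M \<union> f ` M)"
proof -
  let ?F = "{M. M \<subseteq> Q \<and> M \<inter> f ` M = {}}"
  have fin2: "finite ?F" by (rule finite_subset[of _ "Pow Q"]) (auto simp: fin)
  have ne: "?F \<noteq> {}" proof - have "{} \<in> ?F" by simp thus ?thesis by blast qed
  obtain M where M: "M \<in> ?F" and mx: "\<forall>M'\<in>?F. M \<le> M' \<longrightarrow> M = M'"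
    using finite_has_maximal[OF fin2 ne] by blast
  have MQ: "M \<subseteq> Q" using M by auto
  have cov: "Q \<subseteq> M \<union> f ` M \<union> {q\<in>Q. f q \<in> M}"
  proof
    fix q assume q: "q \<in> Q"
    show "q \<in> M \<union> f ` M \<union> {q\<in>Q. f q \<in> M}"
    proof (rule ccontr)
      assume n: "\<not> ?thesis"
      hence a: "q \<notin> M" "q \<notin> f`M" "f q \<notin> M" using q by auto
      have "insert q M \<in> ?F" using M q a nf[OF q] by auto
      then have "M \<le> insert q M \<longrightarrow> M = insert q M" by (rule bspec[OF mx])
      then have "M = insert q M" by auto
      thus False using a by auto
    qed
  qed
  have fM: "finite M" using MQ fin finite_subset by blast
  have c1: "card (f ` M) \<le> card M" using card_image_le fM by blast
  have c2: "card {q\<in>Q. f q \<in> M} \<le> card M"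
    by (rule card_inj_on_le[where f=f]) (auto intro: inj_on_subset[OF inj] simp: fM)
  have "card Q \<le> card (M \<union> f ` M \<union> {q\<in>Q. f q \<in> M})"
    using cov fM fin by (intro card_mono) auto
  also have "\<dots> \<le> card M + card (f ` M) + card {q\<in>Q. f q \<in> M}"
    by (meson add_le_mono card_Un_le le_refl order_trans)
  finally have b3: "card Q \<le> 3 * card M" using c1 c2 by linarith
  have b2: "card Q \<le> 2 * card M \<and> Q \<subseteq> M \<union> f ` M" if inv: "\<forall>q\<in>Q. f (f q) = q"
  proof -
    have "{q\<in>Q. f q \<in> M} \<subseteq> f ` M"
    proof
      fix q assume "q \<in> {q\<in>Q. f q \<in> M}"
      then have "q \<in> Q" "f q \<in> M" by auto
      then have "q = f (f q)" using inv by auto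
      thus "q \<in> f ` M" using \<open>f q \<in> M\<close> by (metis imageI)
    qed
    hence cov2: "Q \<subseteq> M \<union> f ` M" using cov by auto
    have "card Q \<le> card (M \<union> f ` M)" using cov2 fM by (intro card_mono) auto
    also have "\<dots> \<le> card M + card (f ` M)" by (rule card_Un_le)
    finally show ?thesis using c1 cov2 by linarith
  qed
  show ?thesis using MQ M b3 b2 by blast
qed

lemma count_lemma:
  fixes G :: "'a set" and iota phi :: "'a \<Rightarrow> 'a"
  assumes fin: "finite G" and iG: "\<And>x. x\<in>G \<Longrightarrow> iota x \<in> G"
    and ii: "\<And>x. x\<in>G \<Longrightarrow> iota (iota x) = x"
    and pG: "\<And>x. x\<in>G \<Longrightarrow> phi x \<in> G" and pinj: "inj_on phi G"
    and comm: "\<And>x. x\<in>G \<Longrightarrow> phi (iota x) = iota (phi x)"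
  shows "\<exists>m1 m2. m1 + m2 \<le> card G
     \<and> card {S. S \<subseteq> G \<and> iota ` S = S \<and> phi ` S = S} \<le> 2^(card G - m1 - m2)
     \<and> card {x\<in>G. iota x \<noteq> x} \<le> 2*m1
     \<and> card {x\<in>G. phi x \<noteq> x \<and> phi x \<noteq> iota x} \<le> 6*m2
     \<and> ((\<forall>x\<in>G. phi (phi x) = x) \<longrightarrow> card {x\<in>G. phi x \<noteq> x \<and> phi x \<noteq> iota x} \<le> 4*m2)"
proof -
  define J where "J = {x\<in>G. iota x \<noteq> x}"
  have iinj: "inj_on iota G" by (metis ii inj_onI)
  obtain X1 where X1: "X1 \<subseteq> J" "X1 \<inter> iota ` X1 = {}" "card J \<le> 2 * card X1" "J \<subseteq> X1 \<union> iota ` X1"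
  proof -
    have "\<exists>M\<subseteq>J. M \<inter> iota ` M = {} \<and> card J \<le> 3 * card M
           \<and> ((\<forall>q\<in>J. iota (iota q) = q) \<longrightarrow> card J \<le> 2 * card M \<and> J \<subseteq> M \<union> iota ` M)"
      by (rule select_set) (auto simp: J_def fin iG ii intro: inj_on_subset[OF iinj])
    moreover have "\<forall>q\<in>J. iota (iota q) = q" using ii J_def by auto
    ultimately show ?thesis using that by blast
  qed
  have X1G: "X1 \<subseteq> G" using X1 J_def by auto
  define N1 where "N1 = G - X1"
  have key1: "iota y \<in> X1" if "y \<in> N1" "iota y \<noteq> y" for y
  proof -
    have "y \<in> J" using that N1_def J_def by auto
    hence "y \<in> iota ` X1" using X1(4) that(1) N1_def by auto
    then obtain z where "z \<in> X1" "y = iota z" by blast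
    thus ?thesis using ii X1G by auto
  qed
  define psi where "psi y = (if phi y \<in> X1 then iota (phi y) else phi y)" for y
  have psiN: "psi y \<in> N1" if "y \<in> G" for y
    using that X1(2) pG iG unfolding psi_def N1_def by (auto intro: image_eqI)
  have psi_cases: "psi y = phi y \<or> psi y = iota (phi y)" for y unfolding psi_def by auto
  define Q where "Q = {x\<in>G. phi x \<noteq> x \<and> phi x \<noteq> iota x}"
  define Q' where "Q' = Q \<inter> N1"
  have phiphi: "phi a = phi b \<Longrightarrow> a \<in> G \<Longrightarrow> b \<in> G \<Longrightarrow> a = b" for a b
    using pinj by (auto dest: inj_onD)
  have ioio: "iota a = iota b \<Longrightarrow> a \<in> G \<Longrightarrow> b \<in> G \<Longrightarrow> a = b" for a b
    using ii by metis
  have Qi: "iota y \<in> Q" if "y \<in> Q" for y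
  proof -
    have y: "y \<in> G" "phi y \<noteq> y" "phi y \<noteq> iota y" using that Q_def by auto
    have "phi (iota y) \<noteq> iota y" using y comm ioio pG by metis
    moreover have "phi (iota y) \<noteq> iota (iota y)" using y comm ii pG by metis
    ultimately show ?thesis using y iG Q_def by auto
  qed
  have Qp: "phi y \<in> Q" if "y \<in> Q" for y
  proof -
    have y: "y \<in> G" "phi y \<noteq> y" "phi y \<noteq> iota y" using that Q_def by auto
    have "phi (phi y) \<noteq> phi y" using y phiphi pG by metis
    moreover have "phi (phi y) \<noteq> iota (phi y)" using y comm phiphi pG iG by metis
    ultimately show ?thesis using y pG Q_def by auto
  qed
  have psiQ: "psi y \<in> Q'" if "y \<in> Q'" for y
  proof -
    have yQ: "y \<in> Q" and yG: "y \<in> G" using that Q'_def Q_def by auto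
    have "psi y \<in> Q" using psi_cases[of y] Qp[OF yQ] Qi[OF Qp[OF yQ]] by auto
    thus ?thesis using psiN[OF yG] Q'_def by auto
  qed
  have psinf: "psi y \<noteq> y" if "y \<in> Q'" for y
  proof -
    have yG: "y \<in> G" and a: "phi y \<noteq> y" and b: "phi y \<noteq> iota y" using that Q'_def Q_def by auto
    have "iota (phi y) \<noteq> y"
    proof
      assume "iota (phi y) = y"
      hence "iota (iota (phi y)) = iota y" by simp
      thus False using ii[OF pG[OF yG]] b by simp
    qed
    thus ?thesis using psi_cases[of y] a by auto
  qed
  have psiinj: "inj_on psi N1"
  proof (rule inj_onI)
    fix y y' assume y: "y \<in> N1" and y': "y' \<in> N1" and e: "psi y = psi y'"
    have G: "y \<in> G" "y' \<in> G" using y y' N1_def by auto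
    have mixed: "a = b" if "phi a = iota (phi b)" "a \<in> N1" "b \<in> N1" for a b
    proof -
      have ab: "a \<in> G" "b \<in> G" using that N1_def by auto
      have "a = iota b" using that ab comm phiphi iG by metis
      show "a = b"
      proof (cases "iota b = b")
        case True thus ?thesis using \<open>a = iota b\<close> by simp
      next
        case False
        hence "iota b \<in> X1" using key1 that by auto
        thus ?thesis using \<open>a = iota b\<close> that N1_def by auto
      qed
    qed
    show "y = y'"
      using psi_cases[of y] psi_cases[of y'] e mixed[OF _ y y'] mixed[OF _ y' y] G phiphi ioio pG
      by metis
  qed
  have finQ': "finite Q'" using fin Q'_def Q_def by auto
  obtain X2 where X2: "X2 \<subseteq> Q'" "X2 \<inter> psi ` X2 = {}" "card Q' \<le> 3 * card X2"
      "(\<forall>q\<in>Q'. psi (psi q) = q) \<longrightarrow> card Q' \<le> 2 * card X2"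
  proof -
    have "\<exists>M\<subseteq>Q'. M \<inter> psi ` M = {} \<and> card Q' \<le> 3 * card M
           \<and> ((\<forall>q\<in>Q'. psi (psi q) = q) \<longrightarrow> card Q' \<le> 2 * card M \<and> Q' \<subseteq> M \<union> psi ` M)"
    proof (rule select_set[OF finQ' psiQ psinf])
      show "inj_on psi Q'" by (rule inj_on_subset[OF psiinj]) (auto simp: Q'_def)
    qed
    thus ?thesis using that by blast
  qed
  have X2N1: "X2 \<subseteq> N1" using X2 Q'_def by auto
  have QQ': "card Q \<le> 2 * card Q'"
  proof -
    have "Q \<subseteq> Q' \<union> iota ` Q'"
    proof
      fix y assume y: "y \<in> Q"
      show "y \<in> Q' \<union> iota ` Q'"
      proof (cases "y \<in> X1")
        case False thus ?thesis using y Q_def Q'_def N1_def by auto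
      next
        case True
        hence "iota y \<notin> X1" using X1(2) by auto
        hence "iota y \<in> Q'" using Qi[OF y] Q'_def N1_def Q_def by auto
        moreover have "y = iota (iota y)" using ii y Q_def by auto
        ultimately show ?thesis by blast
      qed
    qed
    hence "card Q \<le> card (Q' \<union> iota ` Q')" using finQ' by (intro card_mono) auto
    also have "\<dots> \<le> card Q' + card (iota ` Q')" by (rule card_Un_le)
    also have "\<dots> \<le> card Q' + card Q'" using card_image_le finQ' by auto
    finally show ?thesis by simp
  qed
  define N where "N = N1 - X2"
  let ?V = "{S. S \<subseteq> G \<and> iota ` S = S \<and> phi ` S = S}"
  have valid: "(x \<in> S \<longleftrightarrow> iota x \<in> S) \<and> (x \<in> S \<longleftrightarrow> phi x \<in> S)" if S: "S \<in> ?V" and x: "x \<in> G" for S x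
  proof -
    have SG: "S \<subseteq> G" and Si: "iota ` S = S" and Sp: "phi ` S = S" using S by auto
    have 1: "x \<in> S \<longleftrightarrow> iota x \<in> S"
    proof
      assume "x \<in> S" thus "iota x \<in> S" using Si by blast
    next
      assume "iota x \<in> S" hence "iota (iota x) \<in> S" using Si by blast
      thus "x \<in> S" using ii x by simp
    qed
    have 2: "x \<in> S \<longleftrightarrow> phi x \<in> S"
    proof
      assume "x \<in> S" thus "phi x \<in> S" using Sp by blast
    next
      assume "phi x \<in> S" then obtain s where "s \<in> S" "phi x = phi s" using Sp by blast
      thus "x \<in> S" using phiphi SG x by auto
    qed
    show ?thesis using 1 2 by blast
  qed
  have validpsi: "x \<in> S \<longleftrightarrow> psi x \<in> S" if S: "S \<in> ?V" and x: "x \<in> G" for S x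
    using psi_cases[of x] valid[OF S x] valid[OF S pG[OF x]] by metis
  have injV: "inj_on (\<lambda>S. S \<inter> N) ?V"
  proof (rule inj_onI)
    fix S S' assume S: "S \<in> ?V" and S': "S' \<in> ?V" and e: "S \<inter> N = S' \<inter> N"
    have onN1: "x \<in> S \<longleftrightarrow> x \<in> S'" if x: "x \<in> N1" for x
    proof (cases "x \<in> X2")
      case False thus ?thesis using e x N_def by blast
    next
      case True
      have "psi x \<in> N1" using psiN x N1_def by auto
      moreover have "psi x \<notin> X2" using True X2(2) by blast
      ultimately have "psi x \<in> N" using N_def by auto
      moreover have "x \<in> G" using x N1_def by auto
      ultimately show ?thesis using validpsi[OF S] validpsi[OF S'] e by blast
    qed
    have onG: "x \<in> S \<longleftrightarrow> x \<in> S'" if x: "x \<in> G" for x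
    proof (cases "x \<in> X1")
      case False thus ?thesis using onN1 x N1_def by blast
    next
      case True
      hence "iota x \<in> iota ` X1" by (rule imageI)
      hence "iota x \<notin> X1" using X1(2) by blast
      hence "iota x \<in> N1" using iG[OF x] N1_def by auto
      thus ?thesis using onN1 valid[OF S x] valid[OF S' x] by blast
    qed
    have SG: "S \<subseteq> G" "S' \<subseteq> G" using S S' by auto
    have 1: "S \<subseteq> S'"
    proof
      fix x assume "x \<in> S" thus "x \<in> S'" using onG SG by blast
    qed
    have 2: "S' \<subseteq> S"
    proof
      fix x assume "x \<in> S'" thus "x \<in> S" using onG SG by blast
    qed
    from 1 2 show "S = S'" by (rule subset_antisym)
  qed
  have finN: "finite N" using fin N_def N1_def by auto
  have "card ?V \<le> card (Pow N)"
    by (rule card_inj_on_le[OF injV]) (auto simp: finN)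
  also have "\<dots> = 2 ^ card N" using finN by (simp add: card_Pow)
  finally have cV: "card ?V \<le> 2 ^ card N" .
  have finX1: "finite X1" using X1G fin finite_subset by blast
  have finX2: "finite X2" using X2N1 finN N1_def fin finite_subset by (metis finite_Diff)
  have cN1: "card N1 = card G - card X1" using N1_def X1G fin card_Diff_subset finX1 by metis
  have cN: "card N = card N1 - card X2" using N_def X2N1 finX2 card_Diff_subset by metis
  have "card X1 + card X2 \<le> card G"
  proof -
    have "card X2 \<le> card N1" using X2N1 finN N1_def fin by (intro card_mono) auto
    moreover have "card X1 \<le> card G" using X1G fin card_mono by blast
    ultimately show ?thesis using cN1 by linarith
  qed
  moreover have "card N = card G - card X1 - card X2" using cN cN1 by simp
  moreover have "card Q \<le> 6 * card X2" using QQ' X2 by linarith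
  moreover have "card Q \<le> 4 * card X2" if inv: "\<forall>x\<in>G. phi (phi x) = x"
  proof -
    have "psi (psi q) = q" if q: "q \<in> Q'" for q
    proof -
      have qG: "q \<in> G" and qN: "q \<in> N1" using q Q'_def Q_def by auto
      have pq: "psi q \<in> N1" "psi q \<in> G" using psiN qG N1_def by auto
      have pp: "phi (phi q) = q" using inv qG by auto
      have pq2: "phi q \<in> G" using pG qG by auto
      have "psi (psi q) = q \<or> psi (psi q) = iota q"
      proof (cases "psi q = phi q")
        case True thus ?thesis using psi_cases[of "psi q"] pp by auto
      next
        case False
        hence e: "psi q = iota (phi q)" using psi_cases[of q] by auto
        have "phi (iota (phi q)) = iota q" using comm[OF pq2] pp by simp
        moreover have "iota (iota q) = q" using ii qG by simp
        ultimately show ?thesis using psi_cases[of "psi q"] e by auto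
      qed
      moreover have "psi (psi q) \<in> N1" using psiN pq by auto
      moreover have "iota q \<in> N1 \<Longrightarrow> iota q = q" using key1 qN N1_def by auto
      ultimately show ?thesis by auto
    qed
    thus ?thesis using QQ' X2 by auto
  qed
  ultimately show ?thesis using cV X1(3) unfolding J_def Q_def by (intro exI[of _ "card X1"] exI[of _ "card X2"]) simp
qed



context group begin

lemma inv_cancel_left2 [simp]:
  "x \<in> carrier G \<Longrightarrow> z \<in> carrier G \<Longrightarrow> inv x \<otimes> (x \<otimes> z) = z"
  by (simp add: m_assoc[symmetric])

lemma inv_cancel_left3 [simp]:
  "x \<in> carrier G \<Longrightarrow> z \<in> carrier G \<Longrightarrow> x \<otimes> (inv x \<otimes> z) = z"
  by (simp add: m_assoc[symmetric])

lemma sub_half: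
  assumes H: "subgroup H G" and K: "subgroup K G" and HK: "H \<subseteq> K" "H \<noteq> K" and fin: "finite K"
  shows "2 * card H \<le> card K"
proof -
  obtain g where g: "g \<in> K" "g \<notin> H" using HK by blast
  have HG: "H \<subseteq> carrier G" using H subgroup.subset by blast
  have KG: "K \<subseteq> carrier G" using K subgroup.subset by blast
  have gG: "g \<in> carrier G" using g KG by blast
  let ?Hg = "(\<lambda>h. h \<otimes> g) ` H"
  have sub: "H \<union> ?Hg \<subseteq> K" using HK g subgroup.m_closed[OF K] by auto
  have disj: "H \<inter> ?Hg = {}"
  proof (rule ccontr)
    assume "H \<inter> ?Hg \<noteq> {}" then obtain h where h: "h \<in> H" "h \<otimes> g \<in> H" by auto
    have "inv h \<otimes> (h \<otimes> g) \<in> H" using h subgroup.m_closed[OF H] subgroup.m_inv_closed[OF H] by blast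
    moreover have "inv h \<otimes> (h \<otimes> g) = g" using h(1) HG gG by auto
    ultimately show False using g by simp
  qed
  have inj: "inj_on (\<lambda>h. h \<otimes> g) H" using HG gG by (intro inj_onI) (metis subsetD right_cancel)
  have finH: "finite H" using HK fin finite_subset by blast
  have "card (H \<union> ?Hg) = card H + card ?Hg" using disj finH by (simp add: card_Un_disjoint)
  also have "card ?Hg = card H" using card_image[OF inj] .
  finally have "card (H \<union> ?Hg) = 2 * card H" by simp
  moreover have "card (H \<union> ?Hg) \<le> card K" using sub fin card_mono by blast
  ultimately show ?thesis by simp
qed

lemma big_sub:
  "subgroup H G \<Longrightarrow> subgroup K G \<Longrightarrow> H \<subseteq> K \<Longrightarrow> finite K \<Longrightarrow> card K < 2 * card H \<Longrightarrow> H = K"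
  using sub_half by fastforce

lemma comm_inv:
  assumes "a \<in> carrier G" "b \<in> carrier G" "a \<otimes> b = b \<otimes> a"
  shows "a \<otimes> inv b = inv b \<otimes> a"
proof -
  have "a \<otimes> inv b = inv b \<otimes> ((b \<otimes> a) \<otimes> inv b)" using assms(1,2) by (simp add: m_assoc)
  also have "\<dots> = inv b \<otimes> ((a \<otimes> b) \<otimes> inv b)" using assms(3) by simp
  also have "\<dots> = inv b \<otimes> a" using assms(1,2) by (simp add: m_assoc)
  finally show ?thesis .
qed

lemma cent_sub:
  assumes K: "subgroup K G" and a: "a \<in> carrier G"
  shows "subgroup {b\<in>K. a \<otimes> b = b \<otimes> a} G"
proof (rule subgroupI)
  have KG: "K \<subseteq> carrier G" using K subgroup.subset by blast
  show "{b\<in>K. a \<otimes> b = b \<otimes> a} \<subseteq> carrier G" using KG by auto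
  show "{b\<in>K. a \<otimes> b = b \<otimes> a} \<noteq> {}" using subgroup.one_closed[OF K] a by auto
  show "inv b \<in> {b\<in>K. a \<otimes> b = b \<otimes> a}" if "b \<in> {b\<in>K. a \<otimes> b = b \<otimes> a}" for b
    using that comm_inv[OF a, of b] KG subgroup.m_inv_closed[OF K] by auto
  show "b \<otimes> c \<in> {b\<in>K. a \<otimes> b = b \<otimes> a}" if "b \<in> {b\<in>K. a \<otimes> b = b \<otimes> a}" "c \<in> {b\<in>K. a \<otimes> b = b \<otimes> a}" for b c
  proof -
    have bc: "b \<in> carrier G" "c \<in> carrier G" "b \<in> K" "c \<in> K" "a \<otimes> b = b \<otimes> a" "a \<otimes> c = c \<otimes> a"
      using that KG by auto
    have "a \<otimes> (b \<otimes> c) = (a \<otimes> b) \<otimes> c" using bc(1,2) a by (simp add: m_assoc)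
    also have "\<dots> = (b \<otimes> a) \<otimes> c" using bc by simp
    also have "\<dots> = b \<otimes> (a \<otimes> c)" using bc(1,2) a by (simp add: m_assoc)
    also have "\<dots> = b \<otimes> (c \<otimes> a)" using bc by simp
    also have "\<dots> = (b \<otimes> c) \<otimes> a" using bc(1,2) a by (simp add: m_assoc)
    finally show ?thesis using bc subgroup.m_closed[OF K] by auto
  qed
qed

lemma center_sub:
  assumes K: "subgroup K G"
  shows "subgroup {z\<in>K. \<forall>b\<in>K. z \<otimes> b = b \<otimes> z} G"
proof (rule subgroupI)
  have KG: "K \<subseteq> carrier G" using K subgroup.subset by blast
  show "{z\<in>K. \<forall>b\<in>K. z \<otimes> b = b \<otimes> z} \<subseteq> carrier G" using KG by auto
  show "{z\<in>K. \<forall>b\<in>K. z \<otimes> b = b \<otimes> z} \<noteq> {}"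
  proof -
    have "\<one> \<in> {z\<in>K. \<forall>b\<in>K. z \<otimes> b = b \<otimes> z}" using subgroup.one_closed[OF K] KG by auto
    thus ?thesis by blast
  qed
  show "inv z \<in> {z\<in>K. \<forall>b\<in>K. z \<otimes> b = b \<otimes> z}" if "z \<in> {z\<in>K. \<forall>b\<in>K. z \<otimes> b = b \<otimes> z}" for z
    using that comm_inv KG subgroup.m_inv_closed[OF K] by (auto simp: subset_iff)
  show "y \<otimes> z \<in> {z\<in>K. \<forall>b\<in>K. z \<otimes> b = b \<otimes> z}" if "y \<in> {z\<in>K. \<forall>b\<in>K. z \<otimes> b = b \<otimes> z}" "z \<in> {z\<in>K. \<forall>b\<in>K. z \<otimes> b = b \<otimes> z}" for y z
  proof -
    have yz: "y \<in> carrier G" "z \<in> carrier G" "y \<in> K" "z \<in> K" using that KG by auto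
    have "(y \<otimes> z) \<otimes> b = b \<otimes> (y \<otimes> z)" if b: "b \<in> K" for b
    proof -
      have bG: "b \<in> carrier G" using b KG by auto
      have "(y \<otimes> z) \<otimes> b = y \<otimes> (b \<otimes> z)" using yz bG that(1) b \<open>z \<in> {z\<in>K. \<forall>b\<in>K. z \<otimes> b = b \<otimes> z}\<close> by (simp add: m_assoc)
      also have "\<dots> = (b \<otimes> y) \<otimes> z" using yz bG b \<open>y \<in> {z\<in>K. \<forall>b\<in>K. z \<otimes> b = b \<otimes> z}\<close> by (simp add: m_assoc[symmetric])
      finally show ?thesis using yz bG by (simp add: m_assoc)
    qed
    thus ?thesis using yz subgroup.m_closed[OF K] by auto
  qed
qed

end


context group begin

lemma lcancel [simp]:
  "x \<in> carrier G \<Longrightarrow> y \<in> carrier G \<Longrightarrow> z \<in> carrier G \<Longrightarrow> x \<otimes> y = x \<otimes> z \<longleftrightarrow> y = z"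
  by (metis inv_cancel_left2)

lemma inv_34:
  assumes K: "subgroup K G" and fin: "finite K"
    and aG: "\<And>a. a \<in> K \<Longrightarrow> \<alpha> a \<in> carrier G"
    and hom: "\<And>a b. a \<in> K \<Longrightarrow> b \<in> K \<Longrightarrow> \<alpha> (a \<otimes> b) = \<alpha> a \<otimes> \<alpha> b"
    and big: "3 * card K < 4 * card {a\<in>K. \<alpha> a = inv a}"
  shows "(\<forall>a\<in>K. \<forall>b\<in>K. a \<otimes> b = b \<otimes> a) \<and> (\<forall>a\<in>K. \<alpha> a = inv a)"
proof -
  define D where "D = {a\<in>K. \<alpha> a = inv a}"
  have KG: "K \<subseteq> carrier G" using K subgroup.subset by blast
  have DK: "D \<subseteq> K" using D_def by auto
  have finD: "finite D" using DK fin finite_subset by blast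
  have commD: "a \<otimes> b = b \<otimes> a" if "a \<in> D" "b \<in> D" "a \<otimes> b \<in> D" for a b
  proof -
    have ab: "a \<in> carrier G" "b \<in> carrier G" "a \<in> K" "b \<in> K" using that DK KG by auto
    have "inv b \<otimes> inv a = inv a \<otimes> inv b"
    proof -
      have "inv b \<otimes> inv a = inv (a \<otimes> b)" using ab by (simp add: inv_mult_group)
      also have "\<dots> = \<alpha> (a \<otimes> b)" using that D_def by auto
      also have "\<dots> = \<alpha> a \<otimes> \<alpha> b" using hom ab by auto
      also have "\<dots> = inv a \<otimes> inv b" using that D_def by auto
      finally show ?thesis .
    qed
    hence "inv (inv b \<otimes> inv a) = inv (inv a \<otimes> inv b)" by simp
    thus ?thesis using ab by (simp add: inv_mult_group)
  qed
  have cent: "\<forall>b\<in>K. a \<otimes> b = b \<otimes> a" if a: "a \<in> D" for a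
  proof -
    have aK: "a \<in> K" and aG': "a \<in> carrier G" using a DK KG by auto
    define C where "C = {b\<in>K. a \<otimes> b = b \<otimes> a}"
    define E where "E = {b\<in>K. a \<otimes> b \<in> D}"
    have cE: "card E = card D"
    proof -
      have "bij_betw (\<lambda>b. a \<otimes> b) E D"
        unfolding bij_betw_def
      proof
        show "inj_on (\<lambda>b. a \<otimes> b) E" using aG' KG E_def by (intro inj_onI) (metis (no_types, lifting) mem_Collect_eq subsetD lcancel)
        show "(\<lambda>b. a \<otimes> b) ` E = D"
        proof
          show "(\<lambda>b. a \<otimes> b) ` E \<subseteq> D" using E_def by auto
          show "D \<subseteq> (\<lambda>b. a \<otimes> b) ` E"
          proof
            fix d assume d: "d \<in> D"
            have dG: "d \<in> carrier G" using d DK KG by auto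
            have "inv a \<otimes> d \<in> K" using aK d DK subgroup.m_closed[OF K] subgroup.m_inv_closed[OF K] by auto
            moreover have "a \<otimes> (inv a \<otimes> d) = d" using aG' dG by simp
            ultimately show "d \<in> (\<lambda>b. a \<otimes> b) ` E" using d E_def by (metis (mono_tags, lifting) image_eqI mem_Collect_eq)
          qed
        qed
      qed
      thus ?thesis by (rule bij_betw_same_card)
    qed
    have DEC: "D \<inter> E \<subseteq> C" using commD a by (auto simp: C_def E_def D_def)
    have finE: "finite E" using fin E_def by auto
    have "card (D \<union> E) + card (D \<inter> E) = card D + card E"
      using card_Un_Int[OF finD finE] by simp
    moreover have "card (D \<union> E) \<le> card K" using DK E_def fin by (intro card_mono) auto
    moreover have "card (D \<inter> E) \<le> card C" using DEC fin C_def by (intro card_mono) auto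
    moreover have "3 * card K < 4 * card D" using big D_def by simp
    ultimately have "card K < 2 * card C" using cE by linarith
    hence "C = K" using big_sub[OF cent_sub[OF K aG'] K] C_def fin by auto
    thus ?thesis using C_def by auto
  qed
  define Z where "Z = {z\<in>K. \<forall>b\<in>K. z \<otimes> b = b \<otimes> z}"
  have DZ: "D \<subseteq> Z" using cent DK Z_def by auto
  have "card D \<le> card Z" using DZ fin Z_def by (intro card_mono) auto
  hence "card K < 2 * card Z" using big D_def by simp
  hence "Z = K" using big_sub[OF center_sub[OF K] K] Z_def fin by auto
  hence ab: "\<forall>a\<in>K. \<forall>b\<in>K. a \<otimes> b = b \<otimes> a" using Z_def by auto
  have one: "\<alpha> \<one> = \<one>"
  proof -
    have oK: "\<one> \<in> K" using subgroup.one_closed[OF K] .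
    have "\<alpha> \<one> = \<alpha> \<one> \<otimes> \<alpha> \<one>" using hom[OF oK oK] by simp
    thus ?thesis using aG[OF oK] by (metis l_cancel_one)
  qed
  have Dsub: "subgroup D G"
  proof (rule subgroupI)
    show "D \<subseteq> carrier G" using DK KG by auto
    show "D \<noteq> {}"
    proof -
      have "\<one> \<in> D" using one subgroup.one_closed[OF K] D_def by auto
      thus ?thesis by blast
    qed
    show "inv a \<in> D" if a: "a \<in> D" for a
    proof -
      have aK: "a \<in> K" and aG': "a \<in> carrier G" using a DK KG by auto
      have iK: "inv a \<in> K" using aK subgroup.m_inv_closed[OF K] by auto
      have "\<alpha> (inv a) \<otimes> \<alpha> a = \<one>" using hom[OF iK aK] aG' one by simp
      hence "inv (\<alpha> a) = \<alpha> (inv a)" using aG[OF aK] aG[OF iK] by (rule inv_equality)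
      hence "\<alpha> (inv a) = inv (inv a)" using a D_def by auto
      thus ?thesis using iK D_def by auto
    qed
    show "a \<otimes> b \<in> D" if "a \<in> D" "b \<in> D" for a b
    proof -
      have abK: "a \<in> K" "b \<in> K" "a \<in> carrier G" "b \<in> carrier G" using that DK KG by auto
      have iK: "inv a \<in> K" "inv b \<in> K" using abK subgroup.m_inv_closed[OF K] by auto
      have "\<alpha> (a \<otimes> b) = inv a \<otimes> inv b" using hom abK that D_def by auto
      also have "\<dots> = inv b \<otimes> inv a" using ab iK by auto
      also have "\<dots> = inv (a \<otimes> b)" using abK by (simp add: inv_mult_group)
      finally show ?thesis using abK subgroup.m_closed[OF K] D_def by auto
    qed
  qed
  have "card K < 2 * card D" using big D_def by simp
  hence "D = K" using big_sub[OF Dsub K DK fin] by simp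
  thus ?thesis using ab D_def by auto
qed

end


context group begin

lemma phi_inv_case3:
  assumes hom: "\<phi> \<in> hom G G" and nid: "\<exists>x\<in>carrier G. \<phi> x \<noteq> x"
    and pinv: "\<forall>a\<in>carrier G. \<phi> a = inv a"
  shows "(\<forall>a\<in>carrier G. \<forall>b\<in>carrier G. a \<otimes> b = b \<otimes> a) \<and> (\<exists>a\<in>carrier G. a \<otimes> a \<noteq> \<one>)
         \<and> (\<forall>a\<in>carrier G. \<phi> a = inv a)"
proof -
  have ab: "a \<otimes> b = b \<otimes> a" if ab: "a \<in> carrier G" "b \<in> carrier G" for a b
  proof -
    have "inv b \<otimes> inv a = inv a \<otimes> inv b"
    proof -
      have "inv b \<otimes> inv a = inv (a \<otimes> b)" using ab by (simp add: inv_mult_group)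
      also have "\<dots> = \<phi> (a \<otimes> b)" using pinv ab by simp
      also have "\<dots> = \<phi> a \<otimes> \<phi> b" using hom ab by (simp add: hom_mult)
      also have "\<dots> = inv a \<otimes> inv b" using pinv ab by simp
      finally show ?thesis .
    qed
    hence "inv (inv b \<otimes> inv a) = inv (inv a \<otimes> inv b)" by simp
    thus ?thesis using ab by (simp add: inv_mult_group)
  qed
  obtain x where x: "x \<in> carrier G" "\<phi> x \<noteq> x" using nid by blast
  have "x \<otimes> x \<noteq> \<one>"
  proof
    assume "x \<otimes> x = \<one>"
    hence "inv x = x" using x by (intro inv_equality) auto
    thus False using x pinv by auto
  qed
  thus ?thesis using ab x pinv by blast
qed

lemma main_key:
  assumes fin: "finite (carrier G)" and hom: "\<phi> \<in> hom G G"
    and nid: "\<exists>x\<in>carrier G. \<phi> x \<noteq> x"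
    and A_def: "A = {x\<in>carrier G. \<phi> x = x}" and B_def: "B = {x\<in>carrier G. \<phi> x = inv x}"
  shows "((\<forall>a\<in>A. \<forall>b\<in>A. a \<otimes> b = b \<otimes> a)
       \<and> (\<exists>a\<in>A. a \<otimes> a \<noteq> \<one>)
       \<and> card (carrier G) = 2 * card A
       \<and> (\<exists>x\<in>carrier G - A.
            x \<otimes> x \<in> A
          \<and> x \<otimes> x \<noteq> \<one>
          \<and> (x \<otimes> x) \<otimes> (x \<otimes> x) = \<one>
          \<and> (\<forall>a\<in>A. x \<otimes> a \<otimes> inv x = inv a)
          \<and> (\<forall>a\<in>A. \<phi> a = a \<and> \<phi> (a \<otimes> x) = a \<otimes> inv x)))
    \<or> ((\<forall>a\<in>carrier G. \<forall>b\<in>carrier G. a \<otimes> b = b \<otimes> a)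
       \<and> (\<exists>a\<in>carrier G. a \<otimes> a \<noteq> \<one>)
       \<and> (\<forall>a\<in>carrier G. \<phi> a = inv a))
    \<or> card (carrier G) \<le> 24 * card (carrier G - (A \<union> B))"
proof -
  have gh: "group_hom G G \<phi>" by (simp add: group_hom_def group_hom_axioms_def hom is_group)
  have pm: "\<phi> (x \<otimes> y) = \<phi> x \<otimes> \<phi> y" if "x \<in> carrier G" "y \<in> carrier G" for x y
    using hom that by (simp add: hom_mult)
  have pc: "\<phi> x \<in> carrier G" if "x \<in> carrier G" for x using hom that by (rule hom_in_carrier)
  have pi: "\<phi> (inv x) = inv (\<phi> x)" if "x \<in> carrier G" for x using group_hom.hom_inv[OF gh that] .
  have p1: "\<phi> \<one> = \<one>" using group_hom.hom_one[OF gh] .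
  define Q where "Q = carrier G - (A \<union> B)"
  have AG: "A \<subseteq> carrier G" and BG: "B \<subseteq> carrier G" using A_def B_def by auto
  have Asub: "subgroup A G"
  proof (rule subgroupI)
    show "A \<subseteq> carrier G" by (rule AG)
    show "A \<noteq> {}" proof - have "\<one> \<in> A" using A_def p1 by auto thus ?thesis by blast qed
    show "inv a \<in> A" if "a \<in> A" for a using that A_def pi by auto
    show "a \<otimes> b \<in> A" if "a \<in> A" "b \<in> A" for a b using that A_def pm by auto
  qed
  have finA: "finite A" using AG fin finite_subset by blast
  have finB: "finite B" using BG fin finite_subset by blast
  have finQ: "finite Q" using fin Q_def by auto
  have case3: ?thesis if pinv: "\<forall>a\<in>carrier G. \<phi> a = inv a"
    using phi_inv_case3[OF hom nid pinv] by blast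
  have eqv: "a \<otimes> x \<in> B \<longleftrightarrow> x \<otimes> a \<otimes> inv x = inv a" if x: "x \<in> B" and a: "a \<in> A" for x a
  proof -
    have xG: "x \<in> carrier G" and aG: "a \<in> carrier G" using x a AG BG by auto
    have px: "\<phi> x = inv x" and pa: "\<phi> a = a" using x a A_def B_def by auto
    have "a \<otimes> x \<in> B \<longleftrightarrow> \<phi> (a \<otimes> x) = inv (a \<otimes> x)" using xG aG B_def by auto
    also have "\<dots> \<longleftrightarrow> a \<otimes> inv x = inv x \<otimes> inv a" using pm[OF aG xG] px pa xG aG by (simp add: inv_mult_group)
    also have "\<dots> \<longleftrightarrow> x \<otimes> (a \<otimes> inv x) = x \<otimes> (inv x \<otimes> inv a)" by (rule lcancel[symmetric]) (simp_all add: xG aG)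
    also have "\<dots> \<longleftrightarrow> x \<otimes> a \<otimes> inv x = inv a" using xG aG by (simp add: m_assoc)
    finally show ?thesis .
  qed
  have notA: "a \<otimes> y \<in> carrier G - A" if a: "a \<in> A" and y: "y \<in> carrier G - A" for a y
  proof -
    have aG: "a \<in> carrier G" using a AG by auto
    have yG: "y \<in> carrier G" using y by auto
    have "a \<otimes> y \<notin> A"
    proof
      assume "a \<otimes> y \<in> A"
      hence "inv a \<otimes> (a \<otimes> y) \<in> A" using a subgroup.m_closed[OF Asub] subgroup.m_inv_closed[OF Asub] by blast
      thus False using y aG yG by simp
    qed
    thus ?thesis using aG yG by auto
  qed
  have badcount: "card {a\<in>A. a \<otimes> z \<notin> B} \<le> card Q" if z: "z \<in> carrier G - A" for z
  proof (rule card_inj_on_le[where f="\<lambda>a. a \<otimes> z"])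
    show "inj_on (\<lambda>a. a \<otimes> z) {a\<in>A. a \<otimes> z \<notin> B}" using z AG by (intro inj_onI) (metis (no_types, lifting) Diff_iff mem_Collect_eq subsetD right_cancel)
    show "(\<lambda>a. a \<otimes> z) ` {a\<in>A. a \<otimes> z \<notin> B} \<subseteq> Q" using notA z Q_def by auto
    show "finite Q" by (rule finQ)
  qed
  have split: "card A = card {a\<in>A. a \<otimes> z \<in> B} + card {a\<in>A. a \<otimes> z \<notin> B}" for z
  proof -
    have "A = {a\<in>A. a \<otimes> z \<in> B} \<union> {a\<in>A. a \<otimes> z \<notin> B}" by auto
    moreover have "{a\<in>A. a \<otimes> z \<in> B} \<inter> {a\<in>A. a \<otimes> z \<notin> B} = {}" by auto
    ultimately show ?thesis using finA by (metis (no_types, lifting) card_Un_disjoint finite_Un)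
  qed
  have AneG: "A \<noteq> carrier G" using nid A_def by auto
  have QG: "Q \<subseteq> carrier G" using Q_def by auto
  have cardQ: "card Q = card (carrier G) - card (A \<union> B)"
    unfolding Q_def using fin AG BG by (intro card_Diff_subset) (auto intro: finite_subset)
  have cardAB: "card (A \<union> B) \<le> card (carrier G)" using AG BG fin by (intro card_mono) auto
  show ?thesis
  proof (cases "4 * card Q < card A")
    case True
    have F1: "y \<in> B" if y: "y \<in> carrier G - A" for y
    proof -
      have "card {a\<in>A. a \<otimes> y \<notin> B} < card A" using badcount[OF y] True by linarith
      hence "{a\<in>A. a \<otimes> y \<notin> B} \<noteq> A" by auto
      then obtain a0 where a0: "a0 \<in> A" "a0 \<otimes> y \<in> B" by auto
      define x0 where "x0 = a0 \<otimes> y"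
      have x0: "x0 \<in> carrier G - A" "x0 \<in> B" using notA[OF a0(1) y] a0 x0_def by auto
      have x0G: "x0 \<in> carrier G" using x0 by auto
      have good: "{a\<in>A. x0 \<otimes> a \<otimes> inv x0 = inv a} = {a\<in>A. a \<otimes> x0 \<in> B}" using eqv[OF x0(2)] by auto
      have "card {a\<in>A. a \<otimes> x0 \<notin> B} \<le> card Q" using badcount[OF x0(1)] .
      hence "3 * card A < 4 * card {a\<in>A. a \<otimes> x0 \<in> B}"
        using split[of x0] True by linarith
      hence big: "3 * card A < 4 * card {a\<in>A. x0 \<otimes> a \<otimes> inv x0 = inv a}"
        using good by simp
      have "(\<forall>a\<in>A. \<forall>b\<in>A. a \<otimes> b = b \<otimes> a) \<and> (\<forall>a\<in>A. x0 \<otimes> a \<otimes> inv x0 = inv a)"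
      proof (rule inv_34[OF Asub finA])
        show "x0 \<otimes> a \<otimes> inv x0 \<in> carrier G" if "a \<in> A" for a using that AG x0G by auto
        show "x0 \<otimes> (a \<otimes> b) \<otimes> inv x0 = x0 \<otimes> a \<otimes> inv x0 \<otimes> (x0 \<otimes> b \<otimes> inv x0)" if "a \<in> A" "b \<in> A" for a b
          using that AG x0G by (simp add: m_assoc subsetD)
        show "3 * card A < 4 * card {a\<in>A. x0 \<otimes> a \<otimes> inv x0 = inv a}" by (rule big)
      qed
      hence all: "\<forall>a\<in>A. a \<otimes> x0 \<in> B" using eqv[OF x0(2)] by auto
      have "inv a0 \<in> A" using a0 subgroup.m_inv_closed[OF Asub] by auto
      hence "inv a0 \<otimes> x0 \<in> B" using all by auto
      moreover have "inv a0 \<otimes> x0 = y" using x0_def a0 AG y by auto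
      ultimately show ?thesis by simp
    qed
    have F2: "x \<otimes> a \<otimes> inv x = inv a" if x: "x \<in> carrier G - A" and a: "a \<in> A" for x a
      using eqv[OF F1[OF x] a] F1[OF notA[OF a x]] by simp
    show ?thesis
    proof (cases "\<forall>a\<in>A. a \<otimes> a = \<one>")
      case True
      have "\<forall>a\<in>carrier G. \<phi> a = inv a"
      proof
        fix a assume aG: "a \<in> carrier G"
        show "\<phi> a = inv a"
        proof (cases "a \<in> A")
          case True
          hence "inv a = a" using \<open>\<forall>a\<in>A. a \<otimes> a = \<one>\<close> aG by (intro inv_equality) auto
          thus ?thesis using True A_def by auto
        next
          case False thus ?thesis using F1 aG B_def by auto
        qed
      qed
      thus ?thesis by (rule case3)
    next
      case False
      then obtain a1 where a1: "a1 \<in> A" "a1 \<otimes> a1 \<noteq> \<one>" by auto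
      have a1G: "a1 \<in> carrier G" using a1 AG by auto
      show ?thesis
      proof (cases "\<exists>x\<in>carrier G - A. \<exists>y\<in>carrier G - A. x \<otimes> y \<notin> A")
        case True
        then obtain x y where xy: "x \<in> carrier G - A" "y \<in> carrier G - A" "x \<otimes> y \<notin> A" by auto
        have xyG: "x \<in> carrier G" "y \<in> carrier G" using xy by auto
        have xy2: "x \<otimes> y \<in> carrier G - A" using xy xyG by auto
        have ia: "inv a1 \<in> A" using a1 subgroup.m_inv_closed[OF Asub] by auto
        have "inv a1 = (x \<otimes> y) \<otimes> a1 \<otimes> inv (x \<otimes> y)" using F2[OF xy2 a1(1)] by simp
        also have "\<dots> = x \<otimes> (y \<otimes> a1 \<otimes> inv y) \<otimes> inv x" using xyG a1G by (simp add: m_assoc inv_mult_group)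
        also have "\<dots> = x \<otimes> inv a1 \<otimes> inv x" using F2[OF xy(2) a1(1)] by simp
        also have "\<dots> = a1" using F2[OF xy(1) ia] a1G by simp
        finally have "inv a1 = a1" .
        hence "a1 \<otimes> a1 = \<one>" using a1G by (metis r_inv)
        thus ?thesis using a1 by simp
      next
        case False
        hence H: "\<forall>x\<in>carrier G - A. \<forall>y\<in>carrier G - A. x \<otimes> y \<in> A" by auto
        obtain x0 where x0: "x0 \<in> carrier G - A" using AneG AG by auto
        have x0G: "x0 \<in> carrier G" using x0 by auto
        have x0B: "\<phi> x0 = inv x0" using F1[OF x0] B_def by auto
        have ix0: "inv x0 \<in> carrier G - A"
        proof -
          have "inv x0 \<notin> A"
          proof
            assume "inv x0 \<in> A" hence "inv (inv x0) \<in> A" using subgroup.m_inv_closed[OF Asub] by blast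
            thus False using x0 x0G by simp
          qed
          thus ?thesis using x0G by auto
        qed
        define w where "w = x0 \<otimes> x0"
        have wA: "w \<in> A" using H x0 w_def by auto
        have wG: "w \<in> carrier G" using wA AG by auto
        have decomp: "y \<otimes> inv x0 \<in> A \<and> y = (y \<otimes> inv x0) \<otimes> x0" if y: "y \<in> carrier G - A" for y
          using H y ix0 x0G by (auto simp: m_assoc)
        show ?thesis
        proof (cases "w = \<one>")
          case True
          have ix: "inv x0 = x0" using True w_def x0G by (intro inv_equality) auto
          have "\<phi> y = y" if yG: "y \<in> carrier G" for y
          proof (cases "y \<in> A")
            case True thus ?thesis using A_def by auto
          next
            case False
            hence y: "y \<in> carrier G - A" using yG by auto
            define c where "c = y \<otimes> inv x0"
            have cA: "c \<in> A" and yc: "y = c \<otimes> x0" using decomp[OF y] c_def by auto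
            have cG: "c \<in> carrier G" using cA AG by auto
            have "\<phi> y = \<phi> c \<otimes> \<phi> x0" using yc pm cG x0G by simp
            also have "\<dots> = c \<otimes> x0" using cA A_def x0B ix by auto
            finally show ?thesis using yc by simp
          qed
          thus ?thesis using nid by auto
        next
          case False
          have abA: "a \<otimes> b = b \<otimes> a" if ab: "a \<in> A" "b \<in> A" for a b
          proof -
            have abG: "a \<in> carrier G" "b \<in> carrier G" using ab AG by auto
            have abA': "a \<otimes> b \<in> A" using ab subgroup.m_closed[OF Asub] by auto
            have "inv b \<otimes> inv a = inv a \<otimes> inv b"
            proof -
              have "inv b \<otimes> inv a = inv (a \<otimes> b)" using abG by (simp add: inv_mult_group)
              also have "\<dots> = x0 \<otimes> (a \<otimes> b) \<otimes> inv x0" using F2[OF x0 abA'] by simp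
              also have "\<dots> = (x0 \<otimes> a \<otimes> inv x0) \<otimes> (x0 \<otimes> b \<otimes> inv x0)" using abG x0G by (simp add: m_assoc)
              also have "\<dots> = inv a \<otimes> inv b" using F2[OF x0 ab(1)] F2[OF x0 ab(2)] by simp
              finally show ?thesis .
            qed
            hence "inv (inv b \<otimes> inv a) = inv (inv a \<otimes> inv b)" by simp
            thus ?thesis using abG by (simp add: inv_mult_group)
          qed
          have card2: "card (carrier G) = 2 * card A"
          proof -
            let ?Ax = "(\<lambda>a. a \<otimes> x0) ` A"
            have "carrier G = A \<union> ?Ax"
            proof
              show "carrier G \<subseteq> A \<union> ?Ax"
              proof
                fix y assume yG: "y \<in> carrier G"
                show "y \<in> A \<union> ?Ax"
                proof (cases "y \<in> A")
                  case False
                  hence "y \<in> carrier G - A" using yG by auto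
                  from decomp[OF this] show ?thesis by blast
                qed simp
              qed
              show "A \<union> ?Ax \<subseteq> carrier G" using AG x0G by auto
            qed
            moreover have "A \<inter> ?Ax = {}" using notA[OF _ x0] by auto
            moreover have "card ?Ax = card A"
              using AG x0G by (intro card_image inj_onI) (metis subsetD right_cancel)
            ultimately show ?thesis using finA by (metis card_Un_disjoint finite_imageI mult_2)
          qed
          have ww: "w \<otimes> w = \<one>"
          proof -
            have "w = \<phi> w" using wA A_def by auto
            also have "\<dots> = inv x0 \<otimes> inv x0" using w_def pm x0G x0B by simp
            also have "\<dots> = inv w" using w_def x0G by (simp add: inv_mult_group)
            finally have "w = inv w" .
            hence "w \<otimes> w = w \<otimes> inv w" by simp
            thus ?thesis using wG by simp
          qed
          have phx: "\<phi> a = a \<and> \<phi> (a \<otimes> x0) = a \<otimes> inv x0" if a: "a \<in> A" for a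
          proof -
            have aG: "a \<in> carrier G" using a AG by auto
            have "\<phi> a = a" using a A_def by auto
            thus ?thesis using pm[OF aG x0G] x0B by simp
          qed
          have "x0 \<in> carrier G - A \<and> w \<in> A \<and> w \<noteq> \<one> \<and> w \<otimes> w = \<one>
                \<and> (\<forall>a\<in>A. x0 \<otimes> a \<otimes> inv x0 = inv a) \<and> (\<forall>a\<in>A. \<phi> a = a \<and> \<phi> (a \<otimes> x0) = a \<otimes> inv x0)"
            using x0 wA False ww F2[OF x0] phx by auto
          hence "\<exists>x\<in>carrier G - A. x \<otimes> x \<in> A \<and> x \<otimes> x \<noteq> \<one> \<and> (x \<otimes> x) \<otimes> (x \<otimes> x) = \<one>
              \<and> (\<forall>a\<in>A. x \<otimes> a \<otimes> inv x = inv a) \<and> (\<forall>a\<in>A. \<phi> a = a \<and> \<phi> (a \<otimes> x) = a \<otimes> inv x)"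
            unfolding w_def by blast
          thus ?thesis using abA a1 card2 by blast
        qed
      qed
    qed
  next
    case False
    show ?thesis
    proof (cases "card (carrier G) \<le> 6 * card A")
      case True
      hence "card (carrier G) \<le> 24 * card Q" using False by linarith
      thus ?thesis using Q_def by simp
    next
      case N6: False
      show ?thesis
      proof (cases "3 * card (carrier G) < 4 * card B")
        case True
        have "(\<forall>a\<in>carrier G. \<forall>b\<in>carrier G. a \<otimes> b = b \<otimes> a) \<and> (\<forall>a\<in>carrier G. \<phi> a = inv a)"
        proof (rule inv_34[OF subgroup_self fin])
          show "\<phi> a \<in> carrier G" if "a \<in> carrier G" for a using pc that .
          show "\<phi> (a \<otimes> b) = \<phi> a \<otimes> \<phi> b" if "a \<in> carrier G" "b \<in> carrier G" for a b using pm that .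
          show "3 * card (carrier G) < 4 * card {a\<in>carrier G. \<phi> a = inv a}" using True B_def by simp
        qed
        thus ?thesis using case3 by blast
      next
        case False
        have "card (A \<union> B) \<le> card A + card B" by (rule card_Un_le)
        hence "card (carrier G) \<le> 24 * card Q" using False N6 cardQ cardAB by linarith
        thus ?thesis using Q_def by simp
      qed
    qed
  qed
qed

end


context group begin
lemma noninv:
  assumes fin: "finite (carrier G)" and hom: "\<phi> \<in> hom G G"
    and nz: "\<exists>z\<in>carrier G. \<phi> (\<phi> z) \<noteq> z"
    and A_def: "A = {x\<in>carrier G. \<phi> x = x}" and B_def: "B = {x\<in>carrier G. \<phi> x = inv x}"
  shows "card (carrier G) \<le> 2 * card (carrier G - (A \<union> B))"
proof -
  have gh: "group_hom G G \<phi>" by (simp add: group_hom_def group_hom_axioms_def hom is_group)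
  have pm: "\<phi> (x \<otimes> y) = \<phi> x \<otimes> \<phi> y" if "x \<in> carrier G" "y \<in> carrier G" for x y
    using hom that by (simp add: hom_mult)
  have pc: "\<phi> x \<in> carrier G" if "x \<in> carrier G" for x using hom that by (rule hom_in_carrier)
  have pi: "\<phi> (inv x) = inv (\<phi> x)" if "x \<in> carrier G" for x using group_hom.hom_inv[OF gh that] .
  have p1: "\<phi> \<one> = \<one>" using group_hom.hom_one[OF gh] .
  define C where "C = {x\<in>carrier G. \<phi> (\<phi> x) = x}"
  have Csub: "subgroup C G"
  proof (rule subgroupI)
    show "C \<subseteq> carrier G" using C_def by auto
    show "C \<noteq> {}" proof - have "\<one> \<in> C" using C_def p1 by auto thus ?thesis by blast qed
    show "inv a \<in> C" if "a \<in> C" for a using that C_def pi pc by auto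
    show "a \<otimes> b \<in> C" if "a \<in> C" "b \<in> C" for a b using that C_def pm pc by auto
  qed
  have "C \<noteq> carrier G" using nz C_def by auto
  hence hC: "2 * card C \<le> card (carrier G)"
    using sub_half[OF Csub subgroup_self _ _ fin] C_def by auto
  have ABC: "A \<union> B \<subseteq> C" using A_def B_def C_def pi by auto
  have "card (A \<union> B) \<le> card C" using ABC fin C_def by (intro card_mono) auto
  moreover have "card (carrier G - (A \<union> B)) = card (carrier G) - card (A \<union> B)"
    using fin A_def B_def by (intro card_Diff_subset) (auto intro: finite_subset)
  moreover have "card (A \<union> B) \<le> card (carrier G)" using fin A_def B_def by (intro card_mono) auto
  ultimately show ?thesis using hC by linarith
qed
end

theorem lemma2p4:
  fixes R :: "('a, 'b) monoid_scheme" and \<phi> :: "'a \<Rightarrow> 'a"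
  assumes "group R" and "finite (carrier R)"
    and "\<phi> \<in> iso R R"
    and "\<exists>x \<in> carrier R. \<phi> x \<noteq> x"
  shows "real (card {S. S \<subseteq> carrier R \<and> inverse_closed R S \<and> \<phi> ` S = S})
           \<le> 2 powr (c_num R - real (card (carrier R)) / 96)
    \<or> (let A = centralizer_aut R \<phi> in
         (\<forall>a \<in> A. \<forall>b \<in> A. a \<otimes>\<^bsub>R\<^esub> b = b \<otimes>\<^bsub>R\<^esub> a)
       \<and> (\<exists>a \<in> A. a \<otimes>\<^bsub>R\<^esub> a \<noteq> \<one>\<^bsub>R\<^esub>)
       \<and> card (carrier R) = 2 * card A
       \<and> (\<exists>x \<in> carrier R - A.
            x \<otimes>\<^bsub>R\<^esub> x \<in> A
          \<and> x \<otimes>\<^bsub>R\<^esub> x \<noteq> \<one>\<^bsub>R\<^esub>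
          \<and> (x \<otimes>\<^bsub>R\<^esub> x) \<otimes>\<^bsub>R\<^esub> (x \<otimes>\<^bsub>R\<^esub> x) = \<one>\<^bsub>R\<^esub>
          \<and> (\<forall>a \<in> A. x \<otimes>\<^bsub>R\<^esub> a \<otimes>\<^bsub>R\<^esub> inv\<^bsub>R\<^esub> x = inv\<^bsub>R\<^esub> a)
          \<and> (\<forall>a \<in> A. \<phi> a = a \<and> \<phi> (a \<otimes>\<^bsub>R\<^esub> x) = a \<otimes>\<^bsub>R\<^esub> inv\<^bsub>R\<^esub> x)))
    \<or> ((\<forall>a \<in> carrier R. \<forall>b \<in> carrier R. a \<otimes>\<^bsub>R\<^esub> b = b \<otimes>\<^bsub>R\<^esub> a)
       \<and> (\<exists>a \<in> carrier R. a \<otimes>\<^bsub>R\<^esub> a \<noteq> \<one>\<^bsub>R\<^esub>)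
       \<and> (\<forall>a \<in> carrier R. \<phi> a = inv\<^bsub>R\<^esub> a))"
proof -
  interpret R: group R by (rule assms(1))
  have hom: "\<phi> \<in> hom R R" and bij: "bij_betw \<phi> (carrier R) (carrier R)" using assms(3) by (auto simp: iso_def)
  have pinj: "inj_on \<phi> (carrier R)" using bij bij_betw_def by blast
  have gh: "group_hom R R \<phi>" by (simp add: group_hom_def group_hom_axioms_def hom assms(1))
  have pc: "\<phi> x \<in> carrier R" if "x \<in> carrier R" for x using hom that by (rule hom_in_carrier)
  have pi: "\<phi> (inv\<^bsub>R\<^esub> x) = inv\<^bsub>R\<^esub> (\<phi> x)" if "x \<in> carrier R" for x using group_hom.hom_inv[OF gh that] .
  define A where "A = {x\<in>carrier R. \<phi> x = x}"
  define B where "B = {x\<in>carrier R. \<phi> x = inv\<^bsub>R\<^esub> x}"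
  have Acent: "centralizer_aut R \<phi> = A" by (simp add: centralizer_aut_def A_def)
  have key: "((\<forall>a\<in>A. \<forall>b\<in>A. a \<otimes>\<^bsub>R\<^esub> b = b \<otimes>\<^bsub>R\<^esub> a)
       \<and> (\<exists>a\<in>A. a \<otimes>\<^bsub>R\<^esub> a \<noteq> \<one>\<^bsub>R\<^esub>)
       \<and> card (carrier R) = 2 * card A
       \<and> (\<exists>x\<in>carrier R - A.
            x \<otimes>\<^bsub>R\<^esub> x \<in> A
          \<and> x \<otimes>\<^bsub>R\<^esub> x \<noteq> \<one>\<^bsub>R\<^esub>
          \<and> (x \<otimes>\<^bsub>R\<^esub> x) \<otimes>\<^bsub>R\<^esub> (x \<otimes>\<^bsub>R\<^esub> x) = \<one>\<^bsub>R\<^esub>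
          \<and> (\<forall>a\<in>A. x \<otimes>\<^bsub>R\<^esub> a \<otimes>\<^bsub>R\<^esub> inv\<^bsub>R\<^esub> x = inv\<^bsub>R\<^esub> a)
          \<and> (\<forall>a\<in>A. \<phi> a = a \<and> \<phi> (a \<otimes>\<^bsub>R\<^esub> x) = a \<otimes>\<^bsub>R\<^esub> inv\<^bsub>R\<^esub> x)))
    \<or> ((\<forall>a\<in>carrier R. \<forall>b\<in>carrier R. a \<otimes>\<^bsub>R\<^esub> b = b \<otimes>\<^bsub>R\<^esub> a)
       \<and> (\<exists>a\<in>carrier R. a \<otimes>\<^bsub>R\<^esub> a \<noteq> \<one>\<^bsub>R\<^esub>)
       \<and> (\<forall>a\<in>carrier R. \<phi> a = inv\<^bsub>R\<^esub> a))
    \<or> card (carrier R) \<le> 24 * card (carrier R - (A \<union> B))"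
    by (rule R.main_key[OF assms(2) hom assms(4) A_def B_def])
  show ?thesis
  proof (cases "card (carrier R) \<le> 24 * card (carrier R - (A \<union> B))")
    case False
    thus ?thesis using key Acent by (simp add: Let_def)
  next
    case Q24: True
    define Q where "Q = carrier R - (A \<union> B)"
    have Qeq: "{x\<in>carrier R. \<phi> x \<noteq> x \<and> \<phi> x \<noteq> inv\<^bsub>R\<^esub> x} = Q" using Q_def A_def B_def by auto
    obtain m1 m2 where m: "m1 + m2 \<le> card (carrier R)"
      "card {S. S \<subseteq> carrier R \<and> m_inv R ` S = S \<and> \<phi> ` S = S} \<le> 2^(card (carrier R) - m1 - m2)"
      "card {x\<in>carrier R. inv\<^bsub>R\<^esub> x \<noteq> x} \<le> 2*m1"
      "card Q \<le> 6*m2"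
      "(\<forall>x\<in>carrier R. \<phi> (\<phi> x) = x) \<longrightarrow> card Q \<le> 4*m2"
      using count_lemma[of "carrier R" "m_inv R" \<phi>] assms(2) pc pinj pi Qeq by auto
    have m2: "card (carrier R) \<le> 96 * m2"
    proof (cases "\<forall>x\<in>carrier R. \<phi> (\<phi> x) = x")
      case True
      hence "card Q \<le> 4*m2" using m(5) by blast
      moreover have "card (carrier R) \<le> 24 * card Q" using Q24 Q_def by simp
      ultimately show ?thesis by linarith
    next
      case False
      hence "card (carrier R) \<le> 2 * card Q"
        using R.noninv[OF assms(2) hom _ A_def B_def] Q_def by auto
      thus ?thesis using m(4) by linarith
    qed
    define J where "J = {x\<in>carrier R. inv\<^bsub>R\<^esub> x \<noteq> x}"
    have IJ: "card (involution_set R) + card J = card (carrier R)"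
    proof -
      have "involution_set R = {x\<in>carrier R. inv\<^bsub>R\<^esub> x = x}"
      proof -
        have "x \<otimes>\<^bsub>R\<^esub> x = \<one>\<^bsub>R\<^esub> \<longleftrightarrow> inv\<^bsub>R\<^esub> x = x" if "x \<in> carrier R" for x
          using that by (metis R.inv_equality R.r_inv)
        thus ?thesis unfolding involution_set_def by auto
      qed
      moreover have "carrier R = {x\<in>carrier R. inv\<^bsub>R\<^esub> x = x} \<union> J" using J_def by auto
      moreover have "{x\<in>carrier R. inv\<^bsub>R\<^esub> x = x} \<inter> J = {}" using J_def by auto
      ultimately show ?thesis using assms(2) J_def
        by (metis (no_types, lifting) card_Un_disjoint finite_Un)
    qed
    have Veq: "{S. S \<subseteq> carrier R \<and> inverse_closed R S \<and> \<phi> ` S = S}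
        = {S. S \<subseteq> carrier R \<and> m_inv R ` S = S \<and> \<phi> ` S = S}"
      unfolding inverse_closed_def by simp
    define k where "k = card (carrier R) - m1 - m2"
    have rk: "real k = real (card (carrier R)) - real m1 - real m2" using m(1) k_def by auto
    have "card {S. S \<subseteq> carrier R \<and> inverse_closed R S \<and> \<phi> ` S = S} \<le> 2 ^ k"
      using m(2) Veq k_def by simp
    hence "real (card {S. S \<subseteq> carrier R \<and> inverse_closed R S \<and> \<phi> ` S = S}) \<le> real (2 ^ k)"
      by (rule of_nat_mono)
    hence "real (card {S. S \<subseteq> carrier R \<and> inverse_closed R S \<and> \<phi> ` S = S}) \<le> 2 ^ k"
      by simp
    also have "(2::real) ^ k = 2 powr (real k)" by (simp add: powr_realpow)
    also have "\<dots> \<le> 2 powr (c_num R - real (card (carrier R)) / 96)"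
    proof (rule powr_mono)
      have "real (card J) \<le> 2 * real m1" using m(3) J_def by simp
      moreover have "real (card (carrier R)) \<le> 96 * real m2" using m2 by simp
      moreover have "c_num R = (real (card (carrier R)) + real (card (involution_set R))) / 2" by (simp add: c_num_def)
      moreover have "real (card (involution_set R)) = real (card (carrier R)) - real (card J)" 
      proof -
        have "real (card (involution_set R) + card J) = real (card (carrier R))" using IJ by simp
        thus ?thesis by simp
      qed
      ultimately have cN: "c_num R = real (card (carrier R)) - real (card J) / 2"
        and h1: "real (card J) \<le> 2 * real m1" and h2: "real (card (carrier R)) \<le> 96 * real m2" by simp_all
      show "real k \<le> c_num R - real (card (carrier R)) / 96" unfolding cN rk using h1 h2 by simp
    qed simp
    finally show ?thesis by blast
  qed
qed


end
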